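(* Let $T=S+D$ as in the context. If $T$ is invertible in $\mathcal{L}(X)$, then at least one of the following two inequalities holds: \[ R_{S+D}^{+}:=\lim_{k\to\infty}\left[\sup_{i\in\mathbb{Z}}\left|\frac{\prod_{m=0}^{k-1}w_{i+m}}{\prod_{m=0}^{k}d_{i+m}}\right|\right]^{1/k}\le 1 \qquad\text{or}\qquad R_{S+D}^{-}:=\lim_{k\to\infty}\left[\sup_{i\in\mathbb{Z}}\left|\frac{\prod_{m=1}^{k-1}d_{i-m}}{\prod_{m=1}^{k}w_{i-m}}\right|\right]^{1/k}\le 1 . \]
   Context: $X$ is a separable complex Hilbert space with orthonormal basis $\{e_i\}_{i\in\mathbb{Z}}$. $S$ is the weighted shift $Se_i=w_ie_{i+1}$ ($i\in\mathbb{Z}$) with a bounded weight sequence $\{w_i\}_{i\in\mathbb{Z}}\subset\mathbb{C}$, and $D$ is the bounded diagonal operator $De_i=d_ie_i$ with bounded $\{d_i\}_{i\in\mathbb{Z}}\subset\mathbb{C}$; $T=S+D$. Empty products equal $1$ (e.g. $\prod_{m=1}^{0}d_{i-m}=1$). The limits defining $R^{\pm}_{S+D}$ are taken in $[0,+\infty]$ (assumed to exist), and a supremum is $+\infty$ if some denominator vanishes or the quotients are unbounded. *)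

theory Defs
  imports "HOL-Analysis.Analysis"
begin

text \<open>The Hilbert space X with orthonormal basis (e_i)_{i in Z} is modelled
 (up to unitary equivalence) as l^2(Z), i.e. square-summable x :: int => complex,
 with e_i the i-th unit vector.\<close>

definition l2 :: "(int \<Rightarrow> complex) \<Rightarrow> bool" where
  "l2 x \<longleftrightarrow> (\<lambda>i. (cmod (x i))\<^sup>2) summable_on UNIV"

definition l2norm :: "(int \<Rightarrow> complex) \<Rightarrow> real" where
  "l2norm x = sqrt (infsum (\<lambda>i. (cmod (x i))\<^sup>2) UNIV)"

text \<open>T = S + D with S e_i = w_i e_{i+1}, D e_i = d_i e_i, i.e.
 (T x)_i = w_{i-1} x_{i-1} + d_i x_i.\<close>
definition shift_diag :: "(int \<Rightarrow> complex) \<Rightarrow> (int \<Rightarrow> complex) \<Rightarrow> (int \<Rightarrow> complex) \<Rightarrow> (int \<Rightarrow> complex)" where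
  "shift_diag w d x = (\<lambda>i. w (i - 1) * x (i - 1) + d i * x i)"

definition invertible_l2 :: "((int \<Rightarrow> complex) \<Rightarrow> (int \<Rightarrow> complex)) \<Rightarrow> bool" where
  "invertible_l2 T \<longleftrightarrow> (\<exists>U. (\<forall>x. l2 x \<longrightarrow> l2 (U x) \<and> U (T x) = x \<and> T (U x) = x)
       \<and> (\<exists>C. \<forall>x. l2 x \<longrightarrow> l2norm (U x) \<le> C * l2norm x))"

definition equot :: "complex \<Rightarrow> complex \<Rightarrow> ereal" where
  "equot num den = (if den = 0 then \<infinity> else ereal (cmod num / cmod den))"

definition eroot :: "nat \<Rightarrow> ereal \<Rightarrow> ereal" where
  "eroot k x = (if x = \<infinity> then \<infinity> else ereal (root k (real_of_ereal x)))"

definition Rplus_seq :: "(int \<Rightarrow> complex) \<Rightarrow> (int \<Rightarrow> complex) \<Rightarrow> nat \<Rightarrow> ereal" where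
  "Rplus_seq w d k = eroot k (SUP i. equot (\<Prod>m<k. w (i + int m)) (\<Prod>m\<le>k. d (i + int m)))"

definition Rminus_seq :: "(int \<Rightarrow> complex) \<Rightarrow> (int \<Rightarrow> complex) \<Rightarrow> nat \<Rightarrow> ereal" where
  "Rminus_seq w d k = eroot k (SUP i. equot (\<Prod>m\<in>{1..<k}. d (i - int m)) (\<Prod>m\<in>{1..k}. w (i - int m)))"

end

theory Submission
  imports Defs
begin


lemma l2_cmp: "l2 x \<Longrightarrow> (\<And>i. cmod (y i) \<le> cmod (x i)) \<Longrightarrow> l2 y"
  unfolding l2_def
  by (rule summable_on_comparison_test[of "\<lambda>i. (cmod (x i))\<^sup>2"]) (auto intro: power_mono)

lemma l2_trunc: "l2 x \<Longrightarrow> l2 (\<lambda>i. if P i then x i else 0)"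
  by (erule l2_cmp) auto

lemma l2_scale: "l2 x \<Longrightarrow> l2 (\<lambda>i. c * x i)"
  unfolding l2_def by (simp add: norm_mult power_mult_distrib summable_on_cmult_right)

lemma sq_ineq: "(cmod (a + b))\<^sup>2 \<le> 2 * (cmod a)\<^sup>2 + 2 * (cmod b)\<^sup>2"
proof -
  have "cmod (a+b) \<le> cmod a + cmod b" by (rule norm_triangle_ineq)
  hence "(cmod (a + b))\<^sup>2 \<le> (cmod a + cmod b)\<^sup>2" by (simp add: power_mono)
  also have "\<dots> \<le> 2 * (cmod a)\<^sup>2 + 2 * (cmod b)\<^sup>2"
    using zero_le_square[of "cmod a - cmod b"] by (simp add: power2_eq_square algebra_simps)
  finally show ?thesis .
qed

lemma l2_add: "l2 x \<Longrightarrow> l2 y \<Longrightarrow> l2 (\<lambda>i. x i + y i)"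
  unfolding l2_def
  apply (rule summable_on_comparison_test[of "\<lambda>i. 2 * (cmod (x i))\<^sup>2 + 2 * (cmod (y i))\<^sup>2"])
    apply (intro summable_on_add summable_on_cmult_right; assumption)
  using sq_ineq by auto

lemma l2_e: "l2 (\<lambda>i. if i = j then c else 0)"
proof -
  have "(\<lambda>i. (cmod (if i = j then c else 0))\<^sup>2) summable_on {j}" by simp
  thus ?thesis unfolding l2_def
    by (subst summable_on_cong_neutral[where S=UNIV and T="{j}" and g="\<lambda>i. (cmod (if i = j then c else 0))\<^sup>2"]) auto
qed

lemma l2norm_e: "l2norm (\<lambda>i. if i = j then 1 else 0) = 1"
proof -
  have "infsum (\<lambda>i. (cmod (if i = j then (1::complex) else 0))\<^sup>2) UNIV
      = infsum (\<lambda>i. (cmod (if i = j then (1::complex) else 0))\<^sup>2) {j}"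
    by (rule infsum_cong_neutral) auto
  thus ?thesis unfolding l2norm_def by simp
qed

lemma l2_coord: "l2 x \<Longrightarrow> cmod (x i) \<le> l2norm x"
proof -
  assume "l2 x"
  have "infsum (\<lambda>i. (cmod (x i))\<^sup>2) {i} \<le> infsum (\<lambda>i. (cmod (x i))\<^sup>2) UNIV"
    by (rule infsum_mono_neutral) (use \<open>l2 x\<close> in \<open>auto simp: l2_def\<close>)
  hence "(cmod (x i))\<^sup>2 \<le> infsum (\<lambda>i. (cmod (x i))\<^sup>2) UNIV" by simp
  hence "sqrt ((cmod (x i))\<^sup>2) \<le> l2norm x" unfolding l2norm_def using real_sqrt_le_mono by blast
  thus ?thesis by simp
qed



definition ev :: "int \<Rightarrow> int \<Rightarrow> complex" where "ev j = (\<lambda>i. if i = j then 1 else 0)"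

lemma sd_apply: "shift_diag w d x i = w (i - 1) * x (i - 1) + d i * x i"
  by (simp add: shift_diag_def)

context
  fixes w d :: "int \<Rightarrow> complex" and U and C :: real
  assumes hU: "\<forall>x. l2 x \<longrightarrow> l2 (U x) \<and> U (shift_diag w d x) = x \<and> shift_diag w d (U x) = x"
    and hC: "\<forall>x. l2 x \<longrightarrow> l2norm (U x) \<le> C * l2norm x"
begin

lemma injT: "l2 x \<Longrightarrow> l2 y \<Longrightarrow> shift_diag w d x = shift_diag w d y \<Longrightarrow> x = y"
  using hU by metis

lemma zeroT: "l2 z \<Longrightarrow> (\<And>i. shift_diag w d z i = 0) \<Longrightarrow> z = (\<lambda>i. 0)"
  by (rule injT) (auto simp: sd_apply l2_def)

lemma Ue_l2: "l2 (U (ev j))" using hU l2_e[of j 1] by (simp add: ev_def)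
lemma Ue_T: "shift_diag w d (U (ev j)) i = (if i = j then 1 else 0)"
  using hU l2_e[of j 1] by (simp add: ev_def)
lemma Ue_bound: "cmod (U (ev j) i) \<le> C"
proof -
  have "cmod (U (ev j) i) \<le> l2norm (U (ev j))" by (rule l2_coord[OF Ue_l2])
  also have "\<dots> \<le> C * l2norm (ev j)" using hC l2_e[of j 1] by (simp add: ev_def)
  also have "\<dots> = C" using l2norm_e[of j] by (simp add: ev_def)
  finally show ?thesis .
qed

lemma dich: "(d j * U (ev j) j = 1 \<and> (\<forall>i<j. U (ev j) i = 0)) \<or>
             (d j * U (ev j) j = 0 \<and> (\<forall>i\<ge>j. U (ev j) i = 0))"
proof -
  define x where "x = U (ev j)"
  define c where "c = d j * x j"
  define y where "y = (\<lambda>i. if j \<le> i then x i else 0)"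
  have Tx: "\<And>i. w (i - 1) * x (i - 1) + d i * x i = (if i = j then 1 else 0)"
    using Ue_T[of j] by (simp add: x_def sd_apply)
  have xl2: "l2 x" using Ue_l2 x_def by simp
  have "y = (\<lambda>i. c * x i)"
  proof (rule injT)
    show "l2 y" unfolding y_def by (rule l2_trunc[OF xl2])
    show "l2 (\<lambda>i. c * x i)" by (rule l2_scale[OF xl2])
    show "shift_diag w d y = shift_diag w d (\<lambda>i. c * x i)"
    proof
      fix i
      have r: "shift_diag w d (\<lambda>i. c * x i) i = c * (if i = j then 1 else 0)"
      proof -
        have "shift_diag w d (\<lambda>i. c * x i) i = c * (w (i - 1) * x (i - 1) + d i * x i)"
          by (simp add: sd_apply algebra_simps)
        thus ?thesis using Tx[of i] by simp
      qed
      show "shift_diag w d y i = shift_diag w d (\<lambda>i. c * x i) i"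
      proof (cases "i > j")
        case True thus ?thesis using r Tx[of i] by (simp add: sd_apply y_def)
      next
        case False
        thus ?thesis using r by (cases "i = j") (auto simp: sd_apply y_def c_def)
      qed
    qed
  qed
  hence ye: "\<And>i. (if j \<le> i then x i else 0) = c * x i" unfolding y_def by metis
  have xnz: "\<exists>i. x i \<noteq> 0"
  proof (rule ccontr)
    assume "\<not> ?thesis" hence "\<And>i. x i = 0" by auto
    thus False using Tx[of j] by simp
  qed
  show ?thesis
  proof (cases "c = 0")
    case True
    hence "\<forall>i\<ge>j. x i = 0" using ye by (metis mult_zero_left)
    thus ?thesis using True c_def x_def by auto
  next
    case False
    have lo: "\<forall>i<j. x i = 0" using ye False by (metis mult_eq_0_iff not_le)
    have "c = 1"
    proof (rule ccontr)
      assume "c \<noteq> 1"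
      have "\<And>i. x i = 0"
      proof -
        fix i show "x i = 0"
        proof (cases "j \<le> i")
          case True
          hence "x i = c * x i" using ye[of i] by simp
          hence "(1 - c) * x i = 0" by (simp add: algebra_simps)
          thus ?thesis using \<open>c \<noteq> 1\<close> by simp
        qed (use lo in auto)
      qed
      thus False using xnz by auto
    qed
    thus ?thesis using lo c_def x_def by auto
  qed
qed


lemma adj1:
  assumes P1: "d q * U (ev q) q = 1" and P2: "d (q+1) * U (ev (q+1)) (q+1) \<noteq> 1"
  shows False
proof -
  define x where "x = U (ev q)"
  define x' where "x' = U (ev (q+1))"
  have x'0: "\<forall>i\<ge>q+1. x' i = 0" using dich[of "q+1"] P2 x'_def by auto
  have Tx': "\<And>i. w (i - 1) * x' (i - 1) + d i * x' i = (if i = q+1 then 1 else 0)"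
    using Ue_T[of "q+1"] by (simp add: x'_def sd_apply)
  have Tx: "\<And>i. w (i - 1) * x (i - 1) + d i * x i = (if i = q then 1 else 0)"
    using Ue_T[of q] by (simp add: x_def sd_apply)
  have wq: "w q * x' q = 1" using Tx'[of "q+1"] x'0 by simp
  define k where "k = x' q * d q"
  define z where "z = (\<lambda>i. x' i + (if i = q then - x' q else 0) + k * x i)"
  have "z = (\<lambda>i. 0)"
  proof (rule zeroT)
    show "l2 z" unfolding z_def
      by (intro l2_add l2_scale l2_e) (auto simp: x_def x'_def Ue_l2)
    fix i
    have "shift_diag w d z i = (w (i - 1) * x' (i - 1) + d i * x' i)
        + (if i = q+1 then - x' q * w q else 0) + (if i = q then - x' q * d q else 0)
        + k * (w (i - 1) * x (i - 1) + d i * x i)"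
      by (auto simp: sd_apply z_def algebra_simps)
    also have "\<dots> = 0" using Tx[of i] Tx'[of i] k_def wq by (auto simp: mult.commute)
    finally show "shift_diag w d z i = 0" .
  qed
  hence "z q = 0" by simp
  hence "x' q * (d q * x q) = 0" by (simp add: z_def k_def algebra_simps)
  hence "x' q = 0" using P1 x_def by simp
  thus False using wq by simp
qed

lemma adj2:
  assumes P1: "d q * U (ev q) q \<noteq> 1" and P2: "d (q+1) * U (ev (q+1)) (q+1) = 1"
  shows False
proof -
  define x' where "x' = U (ev q)"
  define x where "x = U (ev (q+1))"
  have x'0: "x' q = 0" using dich[of q] P1 x'_def by auto
  have x0: "x q = 0" using dich[of "q+1"] P2 x_def by auto
  have Tx': "\<And>i. w (i - 1) * x' (i - 1) + d i * x' i = (if i = q then 1 else 0)"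
    using Ue_T[of q] by (simp add: x'_def sd_apply)
  have Tx: "\<And>i. w (i - 1) * x (i - 1) + d i * x i = (if i = q+1 then 1 else 0)"
    using Ue_T[of "q+1"] by (simp add: x_def sd_apply)
  define z where "z = (\<lambda>i. (if i = q then 1 else 0) + (- d q) * x' i + (- w q) * x i)"
  have "z = (\<lambda>i. 0)"
  proof (rule zeroT)
    show "l2 z" unfolding z_def
      by (intro l2_add l2_scale l2_e) (auto simp: x_def x'_def Ue_l2)
    fix i
    have "shift_diag w d z i = (if i = q+1 then w q else 0) + (if i = q then d q else 0)
        - d q * (w (i - 1) * x' (i - 1) + d i * x' i)
        - w q * (w (i - 1) * x (i - 1) + d i * x i)"
      by (auto simp: sd_apply z_def algebra_simps)
    also have "\<dots> = 0" using Tx[of i] Tx'[of i] by auto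
    finally show "shift_diag w d z i = 0" .
  qed
  hence "z q = 0" by simp
  thus False using x0 x'0 by (simp add: z_def)
qed

lemma ivt: "Q (a::int) \<Longrightarrow> \<not> Q (a + int n) \<Longrightarrow> \<exists>q. Q q \<and> \<not> Q (q+1)"
proof (induction n)
  case 0 thus ?case by simp
next
  case (Suc n)
  show ?case
  proof (cases "Q (a + int n)")
    case True thus ?thesis using Suc.prems(2) by (intro exI[of _ "a + int n"]) (simp add: algebra_simps)
  qed (use Suc in auto)
qed

lemma uniform: "(\<forall>j. d j * U (ev j) j = 1) \<or> (\<forall>j. d j * U (ev j) j \<noteq> 1)"
proof (rule ccontr)
  define P where "P j \<longleftrightarrow> d j * U (ev j) j = 1" for j
  assume "\<not> ?thesis"
  then obtain a b where a: "P a" and b: "\<not> P b" unfolding P_def by auto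
  show False
  proof (cases "a < b")
    case True
    hence "b = a + int (nat (b - a))" by simp
    then obtain q where "P q" "\<not> P (q+1)" using ivt[of P a "nat (b-a)"] a b by metis
    thus False using adj1 unfolding P_def by blast
  next
    case False
    hence "a = b + int (nat (a - b))" by simp
    then obtain q where "\<not> P q" "P (q+1)" using ivt[of "\<lambda>i. \<not> P i" b "nat (a-b)"] a b by metis
    thus False using adj2 unfolding P_def by blast
  qed
qed

lemma posrel:
  assumes all: "\<forall>j. d j * U (ev j) j = 1"
  shows "U (ev j) (j + int k) * (\<Prod>m\<le>k. d (j + int m)) = (-1)^k * (\<Prod>m<k. w (j + int m))"
proof (induction k)
  case 0 thus ?case using all by (simp add: mult.commute)
next
  case (Suc k)
  have s: "w (j + int k) * U (ev j) (j + int k) + d (j + int (Suc k)) * U (ev j) (j + int (Suc k)) = 0"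
    using Ue_T[of j "j + int (Suc k)"] by (simp add: sd_apply)
  hence e: "d (j + int (Suc k)) * U (ev j) (j + int (Suc k)) = - (w (j + int k) * U (ev j) (j + int k))"
    by (metis eq_neg_iff_add_eq_0 add.commute)
  have "U (ev j) (j + int (Suc k)) * (\<Prod>m\<le>Suc k. d (j + int m))
      = (d (j + int (Suc k)) * U (ev j) (j + int (Suc k))) * (\<Prod>m\<le>k. d (j + int m))"
    by (simp add: prod.atMost_Suc algebra_simps)
  also have "\<dots> = - w (j + int k) * (U (ev j) (j + int k) * (\<Prod>m\<le>k. d (j + int m)))"
    using e by simp
  also have "\<dots> = (-1)^(Suc k) * (\<Prod>m<Suc k. w (j + int m))"
    using Suc.IH by (simp add: prod.lessThan_Suc algebra_simps)
  finally show ?case .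
qed

lemma negrel:
  assumes all: "\<forall>j. d j * U (ev j) j \<noteq> 1"
  shows "U (ev j) (j - int (k+1)) * (\<Prod>m\<in>{1..k+1}. w (j - int m)) = (-1)^k * (\<Prod>m\<in>{1..<k+1}. d (j - int m))"
proof (induction k)
  case 0
  have "U (ev j) j = 0" using dich[of j] all by auto
  thus ?case using Ue_T[of j j] by (simp add: sd_apply mult.commute)
next
  case (Suc k)
  have s: "w (j - int (Suc k + 1)) * U (ev j) (j - int (Suc k + 1)) + d (j - int (k+1)) * U (ev j) (j - int (k+1)) = 0"
  proof -
    have idx: "j - int (k+1) - 1 = j - int (Suc k + 1)" by simp
    show ?thesis using Ue_T[of j "j - int (k+1)"] unfolding sd_apply idx by simp
  qed
  hence e: "w (j - int (Suc k + 1)) * U (ev j) (j - int (Suc k + 1)) = - (d (j - int (k+1)) * U (ev j) (j - int (k+1)))"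
    by (metis eq_neg_iff_add_eq_0)
  have "U (ev j) (j - int (Suc k + 1)) * (\<Prod>m\<in>{1..Suc k + 1}. w (j - int m))
     = (w (j - int (Suc k + 1)) * U (ev j) (j - int (Suc k + 1))) * (\<Prod>m\<in>{1..k+1}. w (j - int m))"
    by (simp add: prod.cl_ivl_Suc algebra_simps)
  also have "\<dots> = - d (j - int (k+1)) * (U (ev j) (j - int (k+1)) * (\<Prod>m\<in>{1..k+1}. w (j - int m)))"
    using e by simp
  also have "\<dots> = (-1)^(Suc k) * (\<Prod>m\<in>{1..<Suc k + 1}. d (j - int m))"
    using Suc.IH by (simp add: prod.atLeastLessThan_Suc algebra_simps)
  finally show ?case .
qed

end

lemma eroot_le: "0 \<le> X \<Longrightarrow> X \<le> ereal M \<Longrightarrow> eroot k X \<le> ereal (root k M)"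
proof -
  assume a: "0 \<le> X" "X \<le> ereal M"
  then obtain s where s: "X = ereal s" "0 \<le> s" "s \<le> M" by (cases X) auto
  have "root k s \<le> root k M"
    by (cases "k = 0") (use s in \<open>auto intro: real_root_le_mono\<close>)
  thus ?thesis using s by (simp add: eroot_def)
qed

lemma lim_le1:
  assumes "convergent f" "\<And>k. f k \<le> ereal (root k M)" "M > 0"
  shows "lim f \<le> (1::ereal)"
proof -
  have "f \<longlonglongrightarrow> lim f" using assms(1) by (simp add: convergent_LIMSEQ_iff)
  moreover have "(\<lambda>k. ereal (root k M)) \<longlonglongrightarrow> 1"
    using tendsto_ereal[OF LIMSEQ_root_const[OF assms(3)]] by (simp add: one_ereal_def)
  ultimately show ?thesis using assms(2) by (intro LIMSEQ_le[of f _ "\<lambda>k. ereal (root k M)"]) auto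
qed

lemma equot_nonneg: "0 \<le> equot a b" by (simp add: equot_def)

theorem mainTheorem1:
  fixes w d :: "int \<Rightarrow> complex"
  assumes w_bdd: "\<exists>B. \<forall>i. cmod (w i) \<le> B"
    and d_bdd: "\<exists>B. \<forall>i. cmod (d i) \<le> B"
    and Rplus_ex: "convergent (Rplus_seq w d)"
    and Rminus_ex: "convergent (Rminus_seq w d)"
    and inv: "invertible_l2 (shift_diag w d)"
  shows "lim (Rplus_seq w d) \<le> 1 \<or> lim (Rminus_seq w d) \<le> 1"
proof -
  obtain U C where hU: "\<forall>x. l2 x \<longrightarrow> l2 (U x) \<and> U (shift_diag w d x) = x \<and> shift_diag w d (U x) = x"
    and hC: "\<forall>x. l2 x \<longrightarrow> l2norm (U x) \<le> C * l2norm x"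
    using inv unfolding invertible_l2_def by blast
  define M where "M = max C 1"
  have M: "M > 0" "C \<le> M" "1 \<le> M" by (auto simp: M_def)
  note bound = Ue_bound[OF hU hC]
  from uniform[OF hU hC] show ?thesis
  proof
    assume all: "\<forall>j. d j * U (ev j) j = 1"
    have dnz: "d i \<noteq> 0" for i using all by (metis mult_zero_left zero_neq_one)
    have "Rplus_seq w d k \<le> ereal (root k M)" for k
    proof -
      have "equot (\<Prod>m<k. w (j + int m)) (\<Prod>m\<le>k. d (j + int m)) \<le> ereal M" for j
      proof -
        have pd: "(\<Prod>m\<le>k. d (j + int m)) \<noteq> 0" using dnz by simp
        have "cmod (U (ev j) (j + int k)) * cmod (\<Prod>m\<le>k. d (j + int m)) = cmod (\<Prod>m<k. w (j + int m))"
          using arg_cong[OF posrel[OF hU hC all, of j k], of cmod] by (simp add: norm_mult norm_power)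
        hence "cmod (\<Prod>m<k. w (j + int m)) / cmod (\<Prod>m\<le>k. d (j + int m)) = cmod (U (ev j) (j + int k))"
          using pd by (simp add: field_simps)
        also have "\<dots> \<le> M" using bound[of j "j + int k"] M by linarith
        finally show ?thesis using pd by (simp add: equot_def)
      qed
      hence "(SUP i. equot (\<Prod>m<k. w (i + int m)) (\<Prod>m\<le>k. d (i + int m))) \<le> ereal M"
        by (intro SUP_least) auto
      moreover have "0 \<le> (SUP i. equot (\<Prod>m<k. w (i + int m)) (\<Prod>m\<le>k. d (i + int m)))"
        by (meson SUP_upper2 UNIV_I equot_nonneg)
      ultimately show ?thesis unfolding Rplus_seq_def by (intro eroot_le)
    qed
    hence "lim (Rplus_seq w d) \<le> 1" by (intro lim_le1[OF Rplus_ex _ M(1)])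
    thus ?thesis ..
  next
    assume all: "\<forall>j. d j * U (ev j) j \<noteq> 1"
    have wnz: "w i \<noteq> 0" for i
    proof -
      have "d (i+1) * U (ev (i+1)) (i+1) = 0" using dich[OF hU hC, of "i+1"] all by auto
      moreover have "w i * U (ev (i+1)) i + d (i+1) * U (ev (i+1)) (i+1) = 1"
        using Ue_T[OF hU hC, of "i+1" "i+1"] by (simp add: sd_apply)
      ultimately show ?thesis by auto
    qed
    have "Rminus_seq w d k \<le> ereal (root k M)" for k
    proof -
      have "equot (\<Prod>m\<in>{1..<k}. d (j - int m)) (\<Prod>m\<in>{1..k}. w (j - int m)) \<le> ereal M" for j
      proof (cases k)
        case 0 thus ?thesis using M by (simp add: equot_def)
      next
        case (Suc k')
        have pw: "(\<Prod>m\<in>{1..k}. w (j - int m)) \<noteq> 0" using wnz by simp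
        have "cmod (U (ev j) (j - int k)) * cmod (\<Prod>m\<in>{1..k}. w (j - int m)) = cmod (\<Prod>m\<in>{1..<k}. d (j - int m))"
          using arg_cong[OF negrel[OF hU hC all, of j k'], of cmod] Suc by (simp add: norm_mult norm_power)
        hence "cmod (\<Prod>m\<in>{1..<k}. d (j - int m)) / cmod (\<Prod>m\<in>{1..k}. w (j - int m)) = cmod (U (ev j) (j - int k))"
          using pw by (simp add: field_simps)
        also have "\<dots> \<le> M" using bound[of j "j - int k"] M by linarith
        finally show ?thesis using pw by (simp add: equot_def)
      qed
      hence "(SUP i. equot (\<Prod>m\<in>{1..<k}. d (i - int m)) (\<Prod>m\<in>{1..k}. w (i - int m))) \<le> ereal M"
        by (intro SUP_least) auto
      moreover have "0 \<le> (SUP i. equot (\<Prod>m\<in>{1..<k}. d (i - int m)) (\<Prod>m\<in>{1..k}. w (i - int m)))"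
        by (meson SUP_upper2 UNIV_I equot_nonneg)
      ultimately show ?thesis unfolding Rminus_seq_def by (intro eroot_le)
    qed
    hence "lim (Rminus_seq w d) \<le> 1" by (intro lim_le1[OF Rminus_ex _ M(1)])
    thus ?thesis ..
  qed
qed

end
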